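(* Let $N_f \ge 1$ be an integer, $\beta>0$, $\lambda>0$ and $r_c>0$. Let $p_r(i)=i^{-\beta}/\sum_{k=1}^{N_f}k^{-\beta}$ for $i=1,\dots,N_f$. Consider the optimization problem \[ \max_{p_c(1),\dots,p_c(N_f)} \ \sum_{i=1}^{N_f}p_r(i)\left(1-e^{-\lambda p_c(i)\pi r_c^2}\right)\quad \text{s.t.}\quad \sum_{i=1}^{N_f}p_c(i)=1,\ \ p_c(i)\ge 0,\ i=1,\dots,N_f, \] and denote its optimal solution by $p_c^*(i)$, $i=1,\dots,N_f$. If $\frac{N_f^{N_f}}{N_f!} < e^{\frac{\lambda\pi r_c^2}{\beta}}$, then \[ p_c^*(i)=\frac{\beta}{\lambda\pi r_c^2 N_f}\sum_{j=1}^{N_f}\ln\Big(\frac{j}{i}\Big)+\frac{1}{N_f},\qquad i=1,\dots,N_f. \] Otherwise, \[ p_c^*(i)=\begin{cases}\frac{\beta}{\lambda\pi r_c^2 i^*}\sum_{j=1}^{i^*}\ln\Big(\frac{j}{i}\Big)+\frac{1}{i^*}, & i\le i^*,\\ 0, & i^*<i\le N_f,\end{cases} \] where the integer $i^*$ satisfies $\frac{(i^*+1)^{i^*}}{i^*!}\ge e^{\frac{\lambda\pi r_c^2}{\beta}}$, $\frac{(i^* )^{i^*}}{i^*!}< e^{\frac{\lambda\pi r_c^2}{\beta}}$, and $\frac{\lambda\pi r_c^2}{\beta}-1\le i^*\le \frac{\lambda\pi r_c^2}{\beta}+\ln(\sqrt{2\pi N_f})+1$.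
   Context: Interpretation: users form a Poisson point process of density $\lambda$; $p_r(i)$ (Zipf distribution with parameter $\beta$) is the probability a user requests file $i$ out of $N_f$ files; $p_c(i)$ is the probability a user caches file $i$; $r_c$ is the collaboration distance; the objective is the offloading ratio. *)

theory Defs
  imports Complex_Main
begin

definition zipf :: "nat \<Rightarrow> real \<Rightarrow> nat \<Rightarrow> real" where
  "zipf Nf \<beta> i = (real i powr (-\<beta>)) / (\<Sum>k=1..Nf. real k powr (-\<beta>))"

definition offload :: "nat \<Rightarrow> real \<Rightarrow> real \<Rightarrow> real \<Rightarrow> (nat \<Rightarrow> real) \<Rightarrow> real" where
  "offload Nf \<beta> lam rc pc =
     (\<Sum>i=1..Nf. zipf Nf \<beta> i * (1 - exp (- lam * pc i * pi * rc^2)))"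

definition feasible :: "nat \<Rightarrow> (nat \<Rightarrow> real) \<Rightarrow> bool" where
  "feasible Nf pc \<longleftrightarrow> (\<Sum>i=1..Nf. pc i) = 1 \<and> (\<forall>i\<in>{1..Nf}. pc i \<ge> 0)"

definition optimal :: "nat \<Rightarrow> real \<Rightarrow> real \<Rightarrow> real \<Rightarrow> (nat \<Rightarrow> real) \<Rightarrow> bool" where
  "optimal Nf \<beta> lam rc pc \<longleftrightarrow> feasible Nf pc \<and>
     (\<forall>q. feasible Nf q \<longrightarrow> offload Nf \<beta> lam rc q \<le> offload Nf \<beta> lam rc pc)"

end

theory Submission
  imports Defs
begin

lemma ln_lower: assumes "(0::real) \<le> x" shows "2*x/(2+x) \<le> ln (1+x)"
proof -
  let ?f = "\<lambda>t::real. ln (1+t) - 2*t/(2+t)"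
  have "?f 0 \<le> ?f x"
  proof (rule DERIV_nonneg_imp_nondecreasing[OF assms])
    fix t :: real assume t: "0 \<le> t" "t \<le> x"
    have "DERIV ?f t :> 1/(1+t) - (2*(2+t) - 2*t)/(2+t)^2"
      using t by (auto intro!: derivative_eq_intros simp: power2_eq_square)
    moreover have "1/(1+t) - (2*(2+t) - 2*t)/(2+t)^2 = t^2/((1+t)*(2+t)^2)"
    proof -
      have d1: "1+t \<noteq> 0" "2+t \<noteq> 0" using t by auto
      show ?thesis using d1 by (simp add: divide_simps) algebra
    qed
    moreover have "t^2/((1+t)*(2+t)^2) \<ge> 0" using t by simp
    ultimately show "\<exists>y. DERIV ?f t :> y \<and> 0 \<le> y" by auto
  qed
  then show ?thesis by simp
qed

lemma ln_fact: "ln (fact k :: real) = (\<Sum>j=1..k. ln (real j))"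
  unfolding fact_prod by (subst of_nat_prod) (subst ln_prod, auto)

lemma fact_upper: "k \<ge> 1 \<Longrightarrow> ln (fact k :: real) \<le> 1 + (real k + 1/2) * ln (real k) - real k"
proof (induction k rule: dec_induct)
  case base then show ?case by simp
next
  case (step k)
  have k: "real k \<ge> 1" using step by simp
  have "2*(1/real k)/(2+1/real k) \<le> ln (1 + 1/real k)" by (rule ln_lower) simp
  moreover have "2*(1/real k)/(2+1/real k) = 2/(2*real k+1)" using k by (simp add: field_simps)
  moreover have "ln (1 + 1/real k) = ln (real k + 1) - ln (real k)"
  proof -
    have "1 + 1/real k = (real k + 1)/real k" using k by (simp add: field_simps)
    then show ?thesis using k by (simp add: ln_div)
  qed
  ultimately have h: "2/(2*real k+1) \<le> ln (real k + 1) - ln (real k)" by simp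
  have "1 \<le> (real k + 1/2) * (ln (real k + 1) - ln (real k))"
  proof -
    have "1 = (real k + 1/2) * (2/(2*real k+1))" using k by (simp add: field_simps)
    also have "\<dots> \<le> (real k + 1/2) * (ln (real k + 1) - ln (real k))"
      using h k by (intro mult_left_mono) auto
    finally show ?thesis .
  qed
  moreover have "ln (fact (Suc k) :: real) = ln (real k + 1) + ln (fact k)"
    by (simp add: ln_mult add.commute)
  ultimately show ?case using step.IH
    by (simp add: algebra_simps)
qed

lemma exp_bound: "(1 + 1/real (Suc n)) ^ Suc n \<le> exp 1"
proof -
  have "(1 + 1/real (Suc n)) ^ Suc n \<le> exp (1/real (Suc n)) ^ Suc n"
    by (intro power_mono) auto
  also have "\<dots> = exp (real (Suc n) * (1/real (Suc n)))" by (simp only: exp_of_nat_mult)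
  also have "\<dots> = exp 1" by simp
  finally show ?thesis .
qed

lemma g_le: "real (k+1) ^ k / fact k \<le> exp (real k)"
proof (induction k)
  case 0 then show ?case by simp
next
  case (Suc k)
  have eq: "real (Suc k+1) ^ Suc k / fact (Suc k) = (1 + 1/real (Suc k)) ^ Suc k * (real (k+1) ^ k / fact k)"
    by (simp add: field_simps power_divide del: of_nat_Suc) (simp add: field_simps)
  have "\<dots> \<le> exp 1 * exp (real k)"
    by (intro mult_mono exp_bound Suc.IH) auto
  also have "\<dots> = exp (real (Suc k))" by (simp add: exp_add[symmetric])
  finally show ?case using eq by simp
qed

lemma term_ineq:
  fixes w c e p q nu :: real
  assumes w: "w > 0" and c: "c > 0" and hk: "w * c * exp (-c*p) * (q - p) \<le> nu * (q - p)"
  shows "w * (1 - exp (-c*q)) \<le> w * (1 - exp (-c*p)) + nu * (q - p)"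
    and "q \<noteq> p \<Longrightarrow> w * (1 - exp (-c*q)) < w * (1 - exp (-c*p)) + nu * (q - p)"
proof -
  have e: "exp (-c*q) = exp (-c*p) * exp (-(c*(q-p)))" by (simp add: exp_add[symmetric] algebra_simps)
  have "1 - c*(q-p) \<le> exp (-(c*(q-p)))" by (rule exp_minus_ge)
  then have "exp (-c*p) * (1 - c*(q-p)) \<le> exp (-c*q)" unfolding e by (intro mult_left_mono) auto
  then have "w * (1 - exp (-c*q)) \<le> w * (1 - exp (-c*p) * (1 - c*(q-p)))" using w by (intro mult_left_mono) auto
  also have "\<dots> = w * (1 - exp (-c*p)) + w * c * exp (-c*p) * (q - p)" by (simp add: algebra_simps)
  also have "\<dots> \<le> w * (1 - exp (-c*p)) + nu * (q - p)" using hk by simp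
  finally show "w * (1 - exp (-c*q)) \<le> w * (1 - exp (-c*p)) + nu * (q - p)" .
  assume qp: "q \<noteq> p"
  have "1 - c*(q-p) < exp (-(c*(q-p)))" using qp c by (subst exp_minus_greater) auto
  then have "exp (-c*p) * (1 - c*(q-p)) < exp (-c*q)" unfolding e by (intro mult_strict_left_mono) auto
  then have "w * (1 - exp (-c*q)) < w * (1 - exp (-c*p) * (1 - c*(q-p)))" using w by (intro mult_strict_left_mono) auto
  also have "\<dots> = w * (1 - exp (-c*p)) + w * c * exp (-c*p) * (q - p)" by (simp add: algebra_simps)
  also have "\<dots> \<le> w * (1 - exp (-c*p)) + nu * (q - p)" using hk by simp
  finally show "w * (1 - exp (-c*q)) < w * (1 - exp (-c*p)) + nu * (q - p)" .
qed

lemma opt_char: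
  fixes Nf k :: nat and \<beta> lam rc :: real
  assumes k1: "1 \<le> k" and kN: "k \<le> Nf" and b: "\<beta> > 0" and l: "lam > 0" and r: "rc > 0"
  and pos: "real k ^ k / fact k < exp (lam*pi*rc^2/\<beta>)"
  and nxt: "k < Nf \<Longrightarrow> exp (lam*pi*rc^2/\<beta>) \<le> real (k+1) ^ k / fact k"
  defines "P \<equiv> \<lambda>i. if i \<le> k then \<beta> / (lam * pi * rc^2 * real k) * (\<Sum>j=1..k. ln (real j / real i)) + 1 / real k else 0"
  shows "optimal Nf \<beta> lam rc pc \<longleftrightarrow> (\<forall>i\<in>{1..Nf}. pc i = P i)"
proof -
  define c where "c = lam*pi*rc^2"
  have c: "c > 0" unfolding c_def using l r by simp
  define L where "L = (\<Sum>j=1..k. ln (real j))"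
  define S where "S = (\<Sum>k=1..Nf. real k powr (-\<beta>))"
  have S: "S > 0" unfolding S_def using k1 kN by (intro sum_pos) auto
  have kr: "real k \<ge> 1" using k1 by simp
  have sumln: "(\<Sum>j=1..k. ln (real j / real i)) = L - real k * ln (real i)" if "i \<ge> 1" for i
    using that by (simp add: ln_div L_def sum_subtractf)
  have Pi: "P i = \<beta> / (c * real k) * (L - real k * ln (real i)) + 1 / real k" if "1 \<le> i" "i \<le> k" for i
    using that sumln unfolding P_def c_def by simp
  have lnfk: "ln (real k ^ k / fact k) = real k * ln (real k) - L"
    by (simp add: ln_div ln_realpow ln_fact L_def)
  have posk: "\<beta> * (real k * ln (real k) - L) < c"
  proof -
    have "ln (real k ^ k / fact k) < ln (exp (c/\<beta>))" using pos kr unfolding c_def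
      by (subst ln_less_cancel_iff) auto
    then have "ln (real k ^ k / fact k) < c/\<beta>" by simp
    then show ?thesis using b by (simp add: lnfk field_simps)
  qed
  have Pnn: "P i \<ge> 0" if "i \<in> {1..Nf}" for i
  proof (cases "i \<le> k")
    case True
    have "ln (real i) \<le> ln (real k)" using True that by simp
    then have "real k * ln (real i) \<le> real k * ln (real k)" using kr by (intro mult_left_mono) auto
    then have "\<beta> * (real k * ln (real i)) \<le> \<beta> * (real k * ln (real k))" by (rule mult_left_mono) (use b in auto)
    then have "\<beta> * (L - real k * ln (real i)) + c > 0" using posk by (simp add: algebra_simps)
    then have "(\<beta> * (L - real k * ln (real i)) + c) / (c * real k) \<ge> 0" using c kr by simp
    moreover have "(\<beta> * (L - real k * ln (real i)) + c) / (c * real k) = P i"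
      using Pi[of i] True that c kr by (simp add: field_simps)
    ultimately show ?thesis by simp
  qed (simp add: P_def)
  have Psum: "(\<Sum>i=1..Nf. P i) = 1"
  proof -
    have "(\<Sum>i=1..Nf. P i) = (\<Sum>i=1..k. P i)"
      using kN by (intro sum.mono_neutral_right) (auto simp: P_def)
    also have "\<dots> = (\<Sum>i=1..k. \<beta> / (c * real k) * (L - real k * ln (real i)) + 1 / real k)"
      by (intro sum.cong) (auto simp: Pi)
    also have "\<dots> = \<beta> / (c * real k) * (\<Sum>i=1..k. L - real k * ln (real i)) + (\<Sum>i=1..k. 1 / real k)"
      by (simp only: sum.distrib sum_distrib_left)
    also have "(\<Sum>i=1..k. L - real k * ln (real i)) = 0"
      by (simp add: sum_subtractf sum_distrib_left[symmetric] L_def)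
    also have "(\<Sum>i=1..k. 1 / real k) = 1" using kr by simp
    finally show ?thesis by simp
  qed
  have feasP: "feasible Nf P" unfolding feasible_def using Psum Pnn by auto
  define nu where "nu = c * exp (-(\<beta>*L + c)/real k) / S"
  have zipf: "zipf Nf \<beta> i = exp (-\<beta> * ln (real i)) / S" if "i \<ge> 1" for i
    using that unfolding zipf_def S_def by (simp add: powr_def)
  have zpos: "zipf Nf \<beta> i > 0" if "i \<ge> 1" for i using zipf[OF that] S by simp
  have hk: "zipf Nf \<beta> i * c * exp (-c * P i) * (x - P i) \<le> nu * (x - P i)"
    if i: "i \<in> {1..Nf}" and x: "x \<ge> 0" for i x
  proof (cases "i \<le> k")
    case True
    have cp: "-c * P i = \<beta> * ln (real i) - (\<beta>*L + c)/real k"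
      using Pi[of i] True i c kr by (simp add: field_simps)
    have e: "exp (-\<beta> * ln (real i)) * exp (-c * P i) = exp (-(\<beta>*L + c)/real k)"
      unfolding cp exp_add[symmetric] by (simp add: minus_divide_left)
    have "zipf Nf \<beta> i * c * exp (-c * P i) = c * (exp (-\<beta> * ln (real i)) * exp (-c * P i)) / S"
      using zipf[of i] i by simp
    then have "zipf Nf \<beta> i * c * exp (-c * P i) = nu"
      unfolding e nu_def by simp
    then show ?thesis by simp
  next
    case False
    then have Pz: "P i = 0" unfolding P_def by simp
    have kl: "k < Nf" using False i by simp
    have "ln (exp (c/\<beta>)) \<le> ln (real (k+1) ^ k / fact k)" using nxt[OF kl] unfolding c_def
      by (subst ln_le_cancel_iff) auto
    then have "ln (real (k+1) ^ k / fact k) \<ge> c/\<beta>" by simp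
    moreover have "ln (real (k+1) ^ k / fact k) = real k * ln (real (k+1)) - L"
      by (simp add: ln_div ln_realpow ln_fact L_def)
    ultimately have "c/\<beta> \<le> real k * ln (real (k+1)) - L" by simp
    then have h1: "c \<le> \<beta> * (real k * ln (real (k+1)) - L)" using b by (simp add: pos_divide_le_eq mult.commute)
    have "ln (real (k+1)) \<le> ln (real i)" using False by simp
    then have "\<beta> * (real k * ln (real (k+1))) \<le> \<beta> * (real k * ln (real i))" using b kr by simp
    with h1 have "\<beta>*L + c \<le> real k * (\<beta> * ln (real i))" by (simp add: algebra_simps)
    then have "(\<beta>*L + c)/real k \<le> \<beta> * ln (real i)" using kr by (simp add: field_simps)
    then have "-\<beta> * ln (real i) \<le> -(\<beta>*L + c)/real k"
      unfolding minus_divide_left[symmetric] by linarith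
    then have "exp (-\<beta> * ln (real i)) \<le> exp (-(\<beta>*L + c)/real k)" by simp
    then have "exp (-\<beta> * ln (real i)) / S * c \<le> exp (-(\<beta>*L + c)/real k) / S * c"
      using S c by (intro mult_right_mono divide_right_mono) auto
    then have "zipf Nf \<beta> i * c * exp (-c * P i) \<le> nu"
      using zipf[of i] i Pz unfolding nu_def by (simp add: field_simps)
    then show ?thesis using Pz x by (simp add: mult_right_mono)
  qed
  have offl: "offload Nf \<beta> lam rc q = (\<Sum>i=1..Nf. zipf Nf \<beta> i * (1 - exp (-c * q i)))" for q
    unfolding offload_def c_def by (intro sum.cong) (auto simp: algebra_simps)
  have main: "offload Nf \<beta> lam rc q \<le> offload Nf \<beta> lam rc P"
     and strict: "(\<exists>i\<in>{1..Nf}. q i \<noteq> P i) \<Longrightarrow> offload Nf \<beta> lam rc q < offload Nf \<beta> lam rc P"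
    if fq: "feasible Nf q" for q
  proof -
    have qn: "q i \<ge> 0" if "i \<in> {1..Nf}" for i using fq that unfolding feasible_def by auto
    have qs: "(\<Sum>i=1..Nf. q i) = 1" using fq unfolding feasible_def by auto
    have R: "(\<Sum>i=1..Nf. zipf Nf \<beta> i * (1 - exp (-c * P i)) + nu * (q i - P i)) = offload Nf \<beta> lam rc P"
      using qs Psum by (simp add: offl sum.distrib sum_distrib_left[symmetric] sum_subtractf)
    have T: "zipf Nf \<beta> i * (1 - exp (-c * q i)) \<le> zipf Nf \<beta> i * (1 - exp (-c * P i)) + nu * (q i - P i)"
      if "i \<in> {1..Nf}" for i
      using term_ineq(1)[OF zpos c hk[OF that qn[OF that]]] that by simp
    show "offload Nf \<beta> lam rc q \<le> offload Nf \<beta> lam rc P"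
      unfolding R[symmetric] offl[of q] by (intro sum_mono T)
    assume "\<exists>i\<in>{1..Nf}. q i \<noteq> P i"
    then obtain i where i: "i \<in> {1..Nf}" "q i \<noteq> P i" by blast
    have "zipf Nf \<beta> i * (1 - exp (-c * q i)) < zipf Nf \<beta> i * (1 - exp (-c * P i)) + nu * (q i - P i)"
      using term_ineq(2)[OF zpos c hk[OF i(1) qn[OF i(1)]] i(2)] i by simp
    then show "offload Nf \<beta> lam rc q < offload Nf \<beta> lam rc P"
      unfolding R[symmetric] offl[of q] using i T by (intro sum_strict_mono_ex1) auto
  qed
  show ?thesis
  proof
    assume o: "optimal Nf \<beta> lam rc pc"
    then have fp: "feasible Nf pc" and le: "offload Nf \<beta> lam rc P \<le> offload Nf \<beta> lam rc pc"
      using feasP unfolding optimal_def by auto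
    show "\<forall>i\<in>{1..Nf}. pc i = P i"
    proof (rule ccontr)
      assume "\<not> (\<forall>i\<in>{1..Nf}. pc i = P i)"
      then have "offload Nf \<beta> lam rc pc < offload Nf \<beta> lam rc P" using strict[OF fp] by auto
      with le show False by simp
    qed
  next
    assume eq: "\<forall>i\<in>{1..Nf}. pc i = P i"
    have s1: "(\<Sum>i=1..Nf. pc i) = (\<Sum>i=1..Nf. P i)" using eq by (intro sum.cong) auto
    have fp: "feasible Nf pc" using feasP eq s1 unfolding feasible_def by auto
    have "offload Nf \<beta> lam rc pc = offload Nf \<beta> lam rc P"
      unfolding offl using eq by (intro sum.cong) auto
    then show "optimal Nf \<beta> lam rc pc" using fp main unfolding optimal_def by auto
  qed
qed

theorem proposition1:
  fixes Nf :: nat and \<beta> lam rc :: real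
  assumes "Nf \<ge> 1" and "\<beta> > 0" and "lam > 0" and "rc > 0"
  shows "(real Nf ^ Nf / fact Nf < exp (lam * pi * rc^2 / \<beta>) \<longrightarrow>
            (\<forall>pc. optimal Nf \<beta> lam rc pc \<longleftrightarrow>
               (\<forall>i\<in>{1..Nf}. pc i =
                  \<beta> / (lam * pi * rc^2 * real Nf) * (\<Sum>j=1..Nf. ln (real j / real i))
                  + 1 / real Nf)))
       \<and> (\<not> (real Nf ^ Nf / fact Nf < exp (lam * pi * rc^2 / \<beta>)) \<longrightarrow>
            (\<exists>istar::nat. 1 \<le> istar \<and> istar \<le> Nf \<and>
               real (istar + 1) ^ istar / fact istar \<ge> exp (lam * pi * rc^2 / \<beta>) \<and>
               real istar ^ istar / fact istar < exp (lam * pi * rc^2 / \<beta>) \<and>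
               lam * pi * rc^2 / \<beta> - 1 \<le> real istar \<and>
               real istar \<le> lam * pi * rc^2 / \<beta> + ln (sqrt (2 * pi * real Nf)) + 1 \<and>
               (\<forall>pc. optimal Nf \<beta> lam rc pc \<longleftrightarrow>
                  (\<forall>i\<in>{1..Nf}. pc i =
                     (if i \<le> istar then
                        \<beta> / (lam * pi * rc^2 * real istar) * (\<Sum>j=1..istar. ln (real j / real i))
                        + 1 / real istar
                      else 0)))))"
proof -
  define a where "a = lam * pi * rc^2 / \<beta>"
  have a: "a > 0" unfolding a_def using assms by simp
  have g1: "real 1 ^ 1 / fact 1 < exp a" using a by simp
  have gshift: "real (k+1) ^ (k+1) / fact (k+1) = real (k+1) ^ k / fact k" for k :: nat
    by (simp add: field_simps del: of_nat_Suc)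
  have lng: "ln (real k ^ k / fact k) = real k * ln (real k) - ln (fact k)" if "k \<ge> 1" for k :: nat
    using that by (simp add: ln_div ln_realpow)
  show ?thesis
  proof (intro conjI impI)
    assume h: "real Nf ^ Nf / fact Nf < exp (lam * pi * rc^2 / \<beta>)"
    show "\<forall>pc. optimal Nf \<beta> lam rc pc \<longleftrightarrow>
               (\<forall>i\<in>{1..Nf}. pc i =
                  \<beta> / (lam * pi * rc^2 * real Nf) * (\<Sum>j=1..Nf. ln (real j / real i))
                  + 1 / real Nf)"
    proof
      fix pc
      have "optimal Nf \<beta> lam rc pc \<longleftrightarrow> (\<forall>i\<in>{1..Nf}. pc i = (if i \<le> Nf then
                  \<beta> / (lam * pi * rc^2 * real Nf) * (\<Sum>j=1..Nf. ln (real j / real i))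
                  + 1 / real Nf else 0))"
        by (rule opt_char) (use assms h in auto)
      then show "optimal Nf \<beta> lam rc pc \<longleftrightarrow>
               (\<forall>i\<in>{1..Nf}. pc i =
                  \<beta> / (lam * pi * rc^2 * real Nf) * (\<Sum>j=1..Nf. ln (real j / real i))
                  + 1 / real Nf)" by auto
    qed
  next
    assume h: "\<not> (real Nf ^ Nf / fact Nf < exp (lam * pi * rc^2 / \<beta>))"
    define A where "A = {k\<in>{1..Nf}. real k ^ k / fact k < exp a}"
    define k where "k = Max A"
    have fA: "finite A" unfolding A_def by simp
    have 1: "1 \<in> A" unfolding A_def using g1 assms by simp
    have kA: "k \<in> A" unfolding k_def using fA 1 by (intro Max_in) auto
    have k1: "1 \<le> k" and kN: "k \<le> Nf" and gk: "real k ^ k / fact k < exp a" using kA unfolding A_def by auto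
    have kl: "k < Nf" using kN gk h unfolding a_def by (cases "k = Nf") auto
    have "k + 1 \<notin> A"
    proof
      assume "k+1 \<in> A"
      then have "k+1 \<le> k" unfolding k_def using fA by (intro Max_ge) auto
      then show False by simp
    qed
    then have "\<not> (real (k+1) ^ (k+1) / fact (k+1) < exp a)" using kl unfolding A_def by auto
    then have gk1: "exp a \<le> real (k+1) ^ k / fact k" unfolding gshift by simp
    have kr: "real k \<ge> 1" using k1 by simp
    have lb: "a - 1 \<le> real k"
    proof -
      have "exp a \<le> exp (real k)" using gk1 g_le[of k] by linarith
      then show ?thesis by simp
    qed
    have ub: "real k \<le> a + ln (sqrt (2 * pi * real Nf)) + 1"
    proof -
      have "ln (real k ^ k / fact k) < ln (exp a)" using gk kr by (subst ln_less_cancel_iff) auto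
      then have "real k * ln (real k) - ln (fact k) < a" using lng[OF k1] by simp
      moreover have "ln (fact k :: real) \<le> 1 + (real k + 1/2) * ln (real k) - real k" by (rule fact_upper[OF k1])
      ultimately have "real k - 1 - ln (real k) / 2 < a" by (simp add: algebra_simps)
      moreover have "ln (real k) \<le> ln (2 * pi * real Nf)"
      proof -
        have "real k \<le> 1 * real Nf" using kN by simp
        also have "\<dots> \<le> 2 * pi * real Nf" using pi_ge_two by (intro mult_right_mono) auto
        finally show ?thesis using kr by simp
      qed
      moreover have "ln (sqrt (2 * pi * real Nf)) = ln (2 * pi * real Nf) / 2"
        using assms by (subst ln_sqrt) auto
      ultimately show ?thesis by linarith
    qed
    show "\<exists>istar::nat. 1 \<le> istar \<and> istar \<le> Nf \<and>
               real (istar + 1) ^ istar / fact istar \<ge> exp (lam * pi * rc^2 / \<beta>) \<and>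
               real istar ^ istar / fact istar < exp (lam * pi * rc^2 / \<beta>) \<and>
               lam * pi * rc^2 / \<beta> - 1 \<le> real istar \<and>
               real istar \<le> lam * pi * rc^2 / \<beta> + ln (sqrt (2 * pi * real Nf)) + 1 \<and>
               (\<forall>pc. optimal Nf \<beta> lam rc pc \<longleftrightarrow>
                  (\<forall>i\<in>{1..Nf}. pc i =
                     (if i \<le> istar then
                        \<beta> / (lam * pi * rc^2 * real istar) * (\<Sum>j=1..istar. ln (real j / real i))
                        + 1 / real istar
                      else 0)))"
    proof (intro exI[of _ k] conjI allI)
      fix pc
      show "optimal Nf \<beta> lam rc pc \<longleftrightarrow>
                  (\<forall>i\<in>{1..Nf}. pc i =
                     (if i \<le> k then
                        \<beta> / (lam * pi * rc^2 * real k) * (\<Sum>j=1..k. ln (real j / real i))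
                        + 1 / real k
                      else 0))"
        by (rule opt_char) (use assms k1 kN gk gk1 in \<open>auto simp: a_def\<close>)
    qed (use k1 kN gk gk1 lb ub in \<open>auto simp: a_def\<close>)
  qed
qed

end
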